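(* Let $X,Y$ be Banach lattices and let $S\colon X\to Y$ be sublinear and continuous. Then $S$ is Lipschitz: there exists $L>0$ with $\|Sx-Sy\|\le L\|x-y\|$ for all $x,y\in X$.
   Context: An operator $S\colon X\to Y$ is sublinear if it is convex, i.e. $S(\lambda x+(1-\lambda)y)\le\lambda Sx+(1-\lambda)Sy$ for all $x,y$, $\lambda\in[0,1]$, and positive homogeneous, i.e. $S(\lambda x)=\lambda Sx$ for all $\lambda>0$, $x\in X$. *)

theory Defs
  imports "HOL-Analysis.Analysis"
begin

text \<open>A Banach lattice: a real Banach space which is a vector lattice (ordered real
vector space whose order is a lattice) with a lattice norm, i.e.
|x| \<le> |y| implies norm x \<le> norm y, where |x| = sup x (-x).\<close>

class banach_lattice = banach + ordered_real_vector + lattice +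
  assumes lattice_norm_mono:
    "sup x (- x) \<le> sup y (- y) \<Longrightarrow> norm x \<le> norm y"

definition sublinear :: "('a::real_vector \<Rightarrow> 'b::ordered_real_vector) \<Rightarrow> bool" where
  "sublinear S \<longleftrightarrow>
     (\<forall>x y (t::real). 0 \<le> t \<and> t \<le> 1 \<longrightarrow>
        S (t *\<^sub>R x + (1 - t) *\<^sub>R y) \<le> t *\<^sub>R S x + (1 - t) *\<^sub>R S y) \<and>
     (\<forall>(t::real) x. t > 0 \<longrightarrow> S (t *\<^sub>R x) = t *\<^sub>R S x)"

end

theory Submission
  imports Defs
begin

lemma bl_abs_nonneg:
  fixes b :: "'b::banach_lattice"
  shows "0 \<le> sup b (- b)"
proof -
  let ?s = "sup b (- b)"
  have "b + - b \<le> ?s + ?s" by (intro add_mono) auto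
  hence h: "0 \<le> ?s + ?s" by simp
  have "0 \<le> (1/2::real) *\<^sub>R (?s + ?s)" using h by (intro scaleR_nonneg_nonneg) auto
  also have "(1/2::real) *\<^sub>R (?s + ?s) = ?s"
    by (metis scaleR_collapse scaleR_half_double)
  finally show ?thesis .
qed

lemma bl_abs_abs:
  fixes s :: "'b::banach_lattice"
  assumes "0 \<le> s"
  shows "sup s (- s) = s"
proof -
  have "- s \<le> s" using assms by (meson dual_order.trans neg_le_0_iff_le)
  thus ?thesis by (simp add: sup_absorb1)
qed

lemma bl_norm_abs:
  fixes b :: "'b::banach_lattice"
  shows "norm (sup b (- b)) = norm b"
proof -
  have e: "sup (sup b (- b)) (- sup b (- b)) = sup b (- b)"
    using bl_abs_abs[OF bl_abs_nonneg] .
  show ?thesis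
    by (rule antisym; rule lattice_norm_mono) (simp_all add: e)
qed

lemma bl_sandwich:
  fixes a b c :: "'b::banach_lattice"
  assumes "- b \<le> a" "a \<le> c"
  shows "norm a \<le> norm b + norm c"
proof -
  let ?B = "sup b (- b)" and ?C = "sup c (- c)"
  have B0: "0 \<le> ?B" and C0: "0 \<le> ?C" by (rule bl_abs_nonneg)+
  have "a \<le> ?C" using assms(2) by (meson order_trans sup_ge1)
  also have "?C \<le> ?B + ?C" using B0 by simp
  finally have 1: "a \<le> ?B + ?C" .
  have "-a \<le> b" using assms(1) by (simp add: minus_le_iff)
  also have "b \<le> ?B" by simp
  also have "?B \<le> ?B + ?C" using C0 by simp
  finally have 2: "- a \<le> ?B + ?C" .
  have "sup a (- a) \<le> ?B + ?C" using 1 2 by simp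
  also have "... = sup (?B + ?C) (- (?B + ?C))"
    using bl_abs_abs[of "?B + ?C"] B0 C0 by (simp add: add_nonneg_nonneg)
  finally have "norm a \<le> norm (?B + ?C)" by (rule lattice_norm_mono)
  also have "... \<le> norm ?B + norm ?C" by (rule norm_triangle_ineq)
  finally show ?thesis by (simp add: bl_norm_abs)
qed

theorem lemmaA7:
  fixes S :: "'a::banach_lattice \<Rightarrow> 'b::banach_lattice"
  assumes "sublinear S"
    and "continuous_on UNIV S"
  shows "\<exists>L>0. \<forall>x y. norm (S x - S y) \<le> L * norm (x - y)"
proof -
  have conv: "\<And>x y (t::real). 0 \<le> t \<Longrightarrow> t \<le> 1 \<Longrightarrow>
        S (t *\<^sub>R x + (1 - t) *\<^sub>R y) \<le> t *\<^sub>R S x + (1 - t) *\<^sub>R S y"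
    and hom: "\<And>t x. t > 0 \<Longrightarrow> S (t *\<^sub>R x) = t *\<^sub>R S x"
    using assms(1) unfolding sublinear_def by auto
  have S0: "S 0 = 0"
  proof -
    have "S 0 = 2 *\<^sub>R S 0" using hom[of 2 0] by simp
    thus ?thesis by (metis add_cancel_right_right scaleR_2)
  qed
  have sub: "S (a + b) \<le> S a + S b" for a b
  proof -
    have "S ((1/2) *\<^sub>R (2 *\<^sub>R a) + (1 - 1/2) *\<^sub>R (2 *\<^sub>R b))
          \<le> (1/2) *\<^sub>R S (2 *\<^sub>R a) + (1 - 1/2) *\<^sub>R S (2 *\<^sub>R b)"
      by (rule conv) auto
    thus ?thesis by (simp add: hom)
  qed
  have bnd: "- S (y - x) \<le> S x - S y \<and> S x - S y \<le> S (x - y)" for x y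
  proof -
    have "S x \<le> S y + S (x - y)" using sub[of y "x - y"] by simp
    moreover have "S y \<le> S x + S (y - x)" using sub[of x "y - x"] by simp
    ultimately show ?thesis by (simp add: algebra_simps)
  qed
  have "isCont S 0" using assms(2) by (simp add: continuous_on_eq_continuous_at)
  then obtain d where d: "d > 0" and dd: "\<And>z. norm z < d \<Longrightarrow> norm (S z) < 1"
    unfolding continuous_at_eps_delta dist_norm using S0
    by (metis diff_zero zero_less_one)
  have lin: "norm (S z) \<le> (2 / d) * norm z" for z
  proof (cases "z = 0")
    case True thus ?thesis by (simp add: S0)
  next
    case False
    let ?t = "d / (2 * norm z)"
    have t0: "?t > 0" using d False by simp
    have "norm (?t *\<^sub>R z) = d / 2" using d False by simp
    hence "norm (S (?t *\<^sub>R z)) < 1" using d by (intro dd) simp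
    hence "?t * norm (S z) < 1" using hom[OF t0] t0 d by simp
    hence "d * norm (S z) < 2 * norm z" using False d
      by (simp add: field_simps)
    thus ?thesis using d by (simp add: field_simps)
  qed
  show ?thesis
  proof (intro exI[of _ "4 / d"] conjI allI)
    show "4 / d > 0" using d by simp
    fix x y
    have "norm (S x - S y) \<le> norm (S (y - x)) + norm (S (x - y))"
      using bnd[of y x] by (intro bl_sandwich) auto
    also have "... \<le> (2/d) * norm (y - x) + (2/d) * norm (x - y)"
      by (intro add_mono lin)
    also have "... = (4/d) * norm (x - y)" by (simp add: norm_minus_commute)
    finally show "norm (S x - S y) \<le> 4 / d * norm (x - y)" .
  qed
qed

end
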